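(* Let $\mathbf{u}\approx\mathbf{v}$ be any identity satisfied by the sylvester monoid $\mathrm{sylv}_2$. Then: (i) $\mathrm{occ}(x,\mathbf{u})=\mathrm{occ}(x,\mathbf{v})$ for every letter $x\in\mathcal{X}$; (ii) $\overrightarrow{\mathrm{occ}}_y(x,\mathbf{u})=\overrightarrow{\mathrm{occ}}_y(x,\mathbf{v})$ for all letters $x,y\in\mathcal{X}$; (iii) $\mathrm{fp}(\mathbf{u})=\mathrm{fp}(\mathbf{v})$.
   Context: A right strict binary search tree is a labelled rooted binary tree (labels from $\{1<2<\cdots\}$) in which each node's label is $\ge$ every label in its left subtree and $<$ every label in its right subtree. Inserting $a$ into such a tree $T$: if $T$ is empty, create a node labelled $a$; otherwise, with root label $x$, recursively insert $a$ into the right subtree if $a>x$ and into the left subtree otherwise. For $w=w_1\cdots w_k$ over $\{1,2\}$, $\mathrm{P}(w)$ is obtained from the empty tree by inserting $w_k,w_{k-1},\dots,w_1$ in this order. The sylvester monoid of rank $2$, $\mathrm{sylv}_2$, is the quotient of the free monoid $\{1,2\}^*$ by the congruence $u\equiv v\iff \mathrm{P}(u)=\mathrm{P}(v)$. $\mathcal{X}$ is a countably infinite alphabet; an identity $\mathbf{u}\approx\mathbf{v}$ ($\mathbf{u},\mathbf{v}\in\mathcal{X}^*$) is satisfied by a monoid $S$ if $\varphi(\mathbf{u})=\varphi(\mathbf{v})$ for all maps $\varphi:\mathcal{X}\to S$ extended to monoid homomorphisms. For a word $\mathbf{w}$ and letters $x,y$: $\mathrm{occ}(x,\mathbf{w})$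 is the number of occurrences of $x$ in $\mathbf{w}$; $\overrightarrow{\mathrm{occ}}_y(x,\mathbf{w})$ is the number of occurrences of $x$ after the last occurrence of $y$ in $\mathbf{w}$; $\mathrm{fp}(\mathbf{w})$ is the word obtained from $\mathbf{w}$ by retaining only the last occurrence of each letter. *)

theory Defs
  imports Main
begin

(* Labelled binary trees; labels are natural numbers (the alphabet {1 < 2 < ...}). *)
datatype tree = Leaf | Node tree nat tree

fun ins :: "nat \<Rightarrow> tree \<Rightarrow> tree" where
  "ins a Leaf = Node Leaf a Leaf"
| "ins a (Node l x r) = (if a > x then Node l x (ins a r) else Node (ins a l) x r)"

definition P :: "nat list \<Rightarrow> tree" where
  "P w = foldr ins w Leaf"

definition sylv_equiv :: "nat list \<Rightarrow> nat list \<Rightarrow> bool" where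
  "sylv_equiv u v \<longleftrightarrow> P u = P v"

(* Words over the countably infinite alphabet X (modelled as nat);
   a map X -> sylv_2 extended to a homomorphism is represented by choosing for
   each letter a representative word over {1,2}; the image of a word is the class
   of the concatenation of representatives. *)
definition subst :: "(nat \<Rightarrow> nat list) \<Rightarrow> nat list \<Rightarrow> nat list" where
  "subst \<sigma> w = concat (map \<sigma> w)"

definition sylv2_satisfies :: "nat list \<Rightarrow> nat list \<Rightarrow> bool" where
  "sylv2_satisfies u v \<longleftrightarrow>
     (\<forall>\<sigma>. (\<forall>x. set (\<sigma> x) \<subseteq> {1, 2}) \<longrightarrow> sylv_equiv (subst \<sigma> u) (subst \<sigma> v))"

definition occ :: "nat \<Rightarrow> nat list \<Rightarrow> nat" where
  "occ x w = count_list w x"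

(* number of occurrences of x after the last occurrence of y in w
   (if y does not occur in w, all occurrences of x are counted) *)
definition occ_after :: "nat \<Rightarrow> nat \<Rightarrow> nat list \<Rightarrow> nat" where
  "occ_after y x w = count_list (rev (takeWhile (\<lambda>c. c \<noteq> y) (rev w))) x"

fun fp :: "nat list \<Rightarrow> nat list" where
  "fp [] = []"
| "fp (a # w) = (if a \<in> set w then fp w else a # fp w)"

end

theory Submission
  imports Defs
begin

fun sp :: "tree \<Rightarrow> nat" where
  "sp Leaf = 0"
| "sp (Node l x r) = (if x = 2 then Suc (sp l) else 0)"

fun full :: "tree \<Rightarrow> bool" where
  "full Leaf = True"
| "full (Node l x r) = (x = 2 \<and> full l)"

lemma sp_ins2: "sp (ins 2 t) = (if full t then Suc (sp t) else sp t)"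
  by (induction t) auto

lemma full_ins2: "full (ins 2 t) = full t"
  by (induction t) auto

lemma sp_ins1: "sp (ins 1 t) = sp t"
  by (induction t) auto

lemma sp_ins1': "sp (ins (Suc 0) t) = sp t"
  by (induction t) auto

lemma full_ins1': "full (ins (Suc 0) t) = False"
  by (induction t) auto

lemma full_ins1: "full (ins 1 t) = False"
  by (induction t) auto

lemma P_Cons: "P (a # w) = ins a (P w)"
  by (simp add: P_def)

lemma full_P: "set w \<subseteq> {1,2} \<Longrightarrow> full (P w) = (\<forall>c\<in>set w. c = 2)"
proof (induction w)
  case Nil then show ?case by (simp add: P_def)
next
  case (Cons a w)
  then have sw: "set w \<subseteq> {1,2}" and a: "a = 1 \<or> a = 2" by auto
  have PC: "full (P (a # w)) = full (ins a (P w))" by (simp only: P_Cons)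
  from a show ?case
  proof
    assume a1: "a = 1"
    have "full (ins a (P w)) = False" unfolding a1 by (rule full_ins1)
    then show ?thesis using PC a1 by simp
  next
    assume a2: "a = 2"
    have "full (ins a (P w)) = full (P w)" unfolding a2 by (rule full_ins2)
    then show ?thesis using PC a2 Cons.IH[OF sw] by simp
  qed
qed

lemma tw_snoc_neg: "\<not> Q a \<Longrightarrow> takeWhile Q (xs @ [a]) = takeWhile Q xs"
  by (induction xs) auto

lemma tw_all: "\<forall>x\<in>set xs. Q x \<Longrightarrow> takeWhile Q (xs @ ys) = xs @ takeWhile Q ys"
  by (induction xs) auto

lemma tw_ex: "\<exists>x\<in>set xs. \<not> Q x \<Longrightarrow> takeWhile Q (xs @ ys) = takeWhile Q xs"
  by (induction xs) auto

lemma sp_P: "set w \<subseteq> {1,2} \<Longrightarrow> sp (P w) = length (takeWhile (\<lambda>c. c = 2) (rev w))"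
proof (induction w)
  case Nil then show ?case by (simp add: P_def)
next
  case (Cons a w)
  then have sw: "set w \<subseteq> {1,2}" and a: "a = 1 \<or> a = 2" by auto
  have IH: "sp (P w) = length (takeWhile (\<lambda>c. c = 2) (rev w))" using Cons.IH[OF sw] .
  have F: "full (P w) = (\<forall>c\<in>set w. c = 2)" using full_P[OF sw] .
  have PC: "P (a # w) = ins a (P w)" by (rule P_Cons)
  have R: "rev (a # w) = rev w @ [a]" by simp
  from a show ?case
  proof
    assume a1: "a = 1"
    have "sp (P (a # w)) = sp (ins a (P w))" by (simp only: PC)
    also have "\<dots> = sp (P w)" unfolding a1 by (rule sp_ins1)
    moreover have "takeWhile (\<lambda>c. c = 2) (rev (a # w)) = takeWhile (\<lambda>c. c = 2) (rev w)"
      unfolding R by (rule tw_snoc_neg) (simp add: a1)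
    ultimately show ?thesis using IH by simp
  next
    assume a2: "a = 2"
    have "sp (P (a # w)) = sp (ins a (P w))" by (simp only: PC)
    also have "\<dots> = (if full (P w) then Suc (sp (P w)) else sp (P w))"
      unfolding a2 by (rule sp_ins2)
    finally have S: "sp (P (a # w)) = (if full (P w) then Suc (sp (P w)) else sp (P w))" .
    show ?thesis
    proof (cases "\<forall>c\<in>set w. c = 2")
      case True
      then have T1: "takeWhile (\<lambda>c. c = 2) (rev (a # w)) = rev w @ takeWhile (\<lambda>c. c = 2) [a]"
        unfolding R by (intro tw_all) simp
      have T2: "takeWhile (\<lambda>c. c = 2) (rev w) = rev w"
        using tw_all[of "rev w" "\<lambda>c. c = 2" "[]"] True by simp
      have L1: "length (takeWhile (\<lambda>c. c = 2) (rev (a # w))) = Suc (length w)"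
        unfolding T1 using a2 by simp
      have L2: "sp (P (a # w)) = Suc (length w)" using S F True IH T2 by simp
      show ?thesis using L1 L2 by simp
    next
      case False
      then have "takeWhile (\<lambda>c. c = 2) (rev (a # w)) = takeWhile (\<lambda>c. c = 2) (rev w)"
        unfolding R by (intro tw_ex) simp
      then show ?thesis using IH S F False by simp
    qed
  qed
qed

lemma size_ins: "size (ins a t) = Suc (size t)"
  by (induction t) auto

lemma size_P: "size (P w) = length w"
  by (induction w) (simp_all add: P_def size_ins)

lemma len_subst1: "length (concat (map (\<lambda>c. if c = x then [1::nat] else []) w)) = count_list w x"
  by (induction w) auto

lemma count_rev: "count_list (rev L) x = count_list L x"
  by (induction L) auto

lemma tw_concat:
  assumes "x \<noteq> y"
  shows "length (takeWhile (\<lambda>c. c = 2) (concat (map (\<lambda>c. if c = x then [2::nat] else if c = y then [1] else []) L)))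
    = count_list (takeWhile (\<lambda>c. c \<noteq> y) L) x"
  using assms by (induction L) auto

lemma rev_subst2:
  "rev (concat (map (\<lambda>c. if c = x then [2::nat] else if c = y then [1] else []) L))
   = concat (map (\<lambda>c. if c = x then [2::nat] else if c = y then [1] else []) (rev L))"
  by (induction L) auto

lemma set_subst2: "set (concat (map (\<lambda>c. if c = x then [2::nat] else if c = y then [1] else []) L)) \<subseteq> {1,2}"
  by auto

lemma sat_inst: "\<forall>\<sigma>. (\<forall>x. set (\<sigma> x) \<subseteq> {1, 2}) \<longrightarrow> P (subst \<sigma> u) = P (subst \<sigma> v)
  \<Longrightarrow> (\<And>x. set (s x) \<subseteq> {1, 2}) \<Longrightarrow> P (subst s u) = P (subst s v)"
  by blast

lemma occ_part:
  assumes "sylv2_satisfies u v"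
  shows "occ x u = occ x v"
proof -
  let ?s = "\<lambda>c. if c = x then [1::nat] else []"
  have "P (subst ?s u) = P (subst ?s v)"
  proof -
    have H: "\<forall>\<sigma>. (\<forall>x. set (\<sigma> x) \<subseteq> {1, 2}) \<longrightarrow> P (subst \<sigma> u) = P (subst \<sigma> v)"
      using assms unfolding sylv2_satisfies_def sylv_equiv_def .
    have I: "(\<forall>c. set (?s c) \<subseteq> {1, 2}) \<longrightarrow> P (subst ?s u) = P (subst ?s v)"
      using H by (rule spec)
    have J: "\<forall>c. set (?s c) \<subseteq> {1, 2}"
    proof
      fix c show "set (?s c) \<subseteq> {1, 2}" by (cases "c = x") simp_all
    qed
    show ?thesis using I J by (rule mp)
  qed
  then have "size (P (subst ?s u)) = size (P (subst ?s v))" by (rule arg_cong)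
  then have "length (subst ?s u) = length (subst ?s v)" by (simp only: size_P)
  then show ?thesis using len_subst1[of x u] len_subst1[of x v] by (simp add: subst_def occ_def)
qed

lemma after_part:
  assumes "sylv2_satisfies u v"
  shows "occ_after y x u = occ_after y x v"
proof (cases "x = y")
  case True
  have "\<And>L. count_list (takeWhile (\<lambda>c. c \<noteq> y) L) y = 0"
    by (auto simp add: count_list_0_iff dest: set_takeWhileD)
  then show ?thesis using True by (simp add: occ_after_def count_rev)
next
  case False
  let ?s = "\<lambda>c. if c = x then [2::nat] else if c = y then [1] else []"
  have "P (subst ?s u) = P (subst ?s v)"
  proof -
    have H: "\<forall>\<sigma>. (\<forall>x. set (\<sigma> x) \<subseteq> {1, 2}) \<longrightarrow> P (subst \<sigma> u) = P (subst \<sigma> v)"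
      using assms unfolding sylv2_satisfies_def sylv_equiv_def .
    have I: "(\<forall>c. set (?s c) \<subseteq> {1, 2}) \<longrightarrow> P (subst ?s u) = P (subst ?s v)"
      using H by (rule spec)
    have J: "\<forall>c. set (?s c) \<subseteq> {1, 2}"
    proof
      fix c show "set (?s c) \<subseteq> {1, 2}" by (cases "c = x"; cases "c = y") simp_all
    qed
    show ?thesis using I J by (rule mp)
  qed
  then have "sp (P (subst ?s u)) = sp (P (subst ?s v))" by simp
  moreover have "sp (P (subst ?s w)) = occ_after y x w" for w
  proof -
    have "sp (P (subst ?s w)) = length (takeWhile (\<lambda>c. c=2) (rev (subst ?s w)))"
      by (rule sp_P) (simp only: subst_def set_subst2)
    also have "\<dots> = length (takeWhile (\<lambda>c. c=2) (concat (map ?s (rev w))))"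
      by (simp only: subst_def rev_subst2)
    also have "\<dots> = count_list (takeWhile (\<lambda>c. c \<noteq> y) (rev w)) x"
      by (rule tw_concat[OF False])
    also have "\<dots> = occ_after y x w"
      by (simp add: occ_after_def count_rev)
    finally show ?thesis .
  qed
  ultimately show ?thesis by simp
qed

lemma fp_remdups: "fp w = remdups w"
  by (induction w) auto

lemma remdups_snoc: "remdups (w @ [a]) = remdups (removeAll a w) @ [a]"
  by (induction w) auto

lemma occ_rm: "occ x (removeAll a w) = (if x = a then 0 else occ x w)"
  by (induction w) (auto simp: occ_def)

lemma occ_snoc: "occ x (w @ [a]) = occ x w + (if x = a then 1 else 0)"
  by (induction w) (auto simp: occ_def)

lemma tw_rm: "y \<noteq> a \<Longrightarrow> takeWhile (\<lambda>c. c \<noteq> y) (removeAll a L) = removeAll a (takeWhile (\<lambda>c. c \<noteq> y) L)"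
  by (induction L) auto

lemma rev_rm: "rev (removeAll a L) = removeAll a (rev L)"
  by (induction L) auto

lemma cnt_rm: "x \<noteq> a \<Longrightarrow> count_list (removeAll a L) x = count_list L x"
  by (induction L) auto

lemma oa_rm: "x \<noteq> a \<Longrightarrow> y \<noteq> a \<Longrightarrow> occ_after y x (removeAll a w) = occ_after y x (w @ [a])"
  by (simp add: occ_after_def count_rev rev_rm tw_rm cnt_rm)

lemma oa_rm_x: "occ_after y a (removeAll a w) = 0"
proof -
  have "a \<notin> set (takeWhile (\<lambda>c. c \<noteq> y) (rev (removeAll a w)))"
    by (auto dest: set_takeWhileD)
  then show ?thesis by (simp add: occ_after_def count_list_0_iff)
qed

lemma oa_rm_y: "occ_after a x (removeAll a w) = occ x (removeAll a w)"
proof -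
  have "takeWhile (\<lambda>c. c \<noteq> a) (rev (removeAll a w)) = rev (removeAll a w)"
    by (simp add: takeWhile_eq_all_conv)
  then show ?thesis unfolding occ_after_def occ_def by (simp only: count_rev)
qed

lemma fp_main:
  "(\<forall>x. occ x u = occ x v) \<Longrightarrow> (\<forall>x y. occ_after y x u = occ_after y x v) \<Longrightarrow> remdups u = remdups v"
proof (induction "length u" arbitrary: u v rule: less_induct)
  case less
  show ?case
  proof (cases "u = []")
    case True
    then have "\<forall>x. occ x v = 0" using less.prems(1) by (simp add: occ_def)
    then have "set v = {}" by (auto simp: occ_def count_list_0_iff)
    then have "v = []" by simp
    then show ?thesis using True by simp
  next
    case False
    then obtain u' a where u: "u = u' @ [a]" by (metis rev_exhaust)
    have "occ a v \<noteq> 0" using less.prems(1)[rule_format, of a] u by (simp add: occ_snoc)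
    then have "v \<noteq> []" by (auto simp: occ_def)
    then obtain v' b where v: "v = v' @ [b]" by (metis rev_exhaust)
    have ba: "b = a"
    proof (rule ccontr)
      assume "b \<noteq> a"
      then have "occ_after a b u = 0" "occ_after a b v \<noteq> 0"
        using u v by (auto simp: occ_after_def)
      moreover have "occ_after a b u = occ_after a b v" using less.prems(2) by blast
      ultimately show False by simp
    qed
    have o1: "\<forall>x. occ x (removeAll a u') = occ x (removeAll a v')"
    proof
      fix x
      show "occ x (removeAll a u') = occ x (removeAll a v')"
        using less.prems(1)[rule_format, of x] u v ba by (simp add: occ_rm occ_snoc)
    qed
    have o2: "\<forall>x y. occ_after y x (removeAll a u') = occ_after y x (removeAll a v')"
    proof (intro allI)
      fix x y
      show "occ_after y x (removeAll a u') = occ_after y x (removeAll a v')"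
      proof (cases "x = a")
        case True then show ?thesis by (simp add: oa_rm_x)
      next
        case xa: False
        show ?thesis
        proof (cases "y = a")
          case True then show ?thesis using o1 by (simp add: oa_rm_y)
        next
          case False
          have e1: "occ_after y x (removeAll a u') = occ_after y x u" using oa_rm[OF xa False] u by simp
          have e2: "occ_after y x (removeAll a v') = occ_after y x v" using oa_rm[OF xa False] v ba by simp
          have "occ_after y x u = occ_after y x v" using less.prems(2) by blast
          then show ?thesis using e1 e2 by simp
        qed
      qed
    qed
    have lt: "length (removeAll a u') < length u" using u
      by (simp add: le_imp_less_Suc length_removeAll_less_eq)
    have "remdups (removeAll a u') = remdups (removeAll a v')"
      by (rule less.hyps[OF lt o1 o2])
    then show ?thesis using u v ba by (simp add: remdups_snoc)
  qed
qed

theorem lemma4p3: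
  fixes u v :: "nat list"
  assumes "sylv2_satisfies u v"
  shows "(\<forall>x. occ x u = occ x v)
       \<and> (\<forall>x y. occ_after y x u = occ_after y x v)
       \<and> fp u = fp v"
  using occ_part[OF assms] after_part[OF assms] fp_main by (simp add: fp_remdups)

end
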